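(* In every T2R semigroup $S=S_0\cup S_1$, we have $S_0^2=S_0$.
   Context: A semigroup $S$ is a $\Delta$-semigroup if the lattice of all congruences of $S$ is a chain with respect to inclusion. A semigroup $N$ with zero $0$ is nil if every element has some power equal to $0$; non-trivial means having more than one element. A T2R semigroup is a $\Delta$-semigroup $S$ which is the disjoint union of a non-trivial nil ideal $S_0$ (with zero $0$, which is then the zero of $S$) and a subsemigroup $S_1=\{u,v\}$, $u\neq v$, which is a right zero semigroup ($xy=y$ for $x,y\in S_1$). $S_0^2=\{xy:x,y\in S_0\}$. *)

theory Defs
  imports Main
begin

definition semigroup_on :: "'a set \<Rightarrow> ('a \<Rightarrow> 'a \<Rightarrow> 'a) \<Rightarrow> bool" where
  "semigroup_on S m \<longleftrightarrow> (\<forall>x\<in>S. \<forall>y\<in>S. m x y \<in> S) \<and>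
     (\<forall>x\<in>S. \<forall>y\<in>S. \<forall>z\<in>S. m (m x y) z = m x (m y z))"

definition congruence_on :: "'a set \<Rightarrow> ('a \<Rightarrow> 'a \<Rightarrow> 'a) \<Rightarrow> ('a \<times> 'a) set \<Rightarrow> bool" where
  "congruence_on S m \<rho> \<longleftrightarrow> equiv S \<rho> \<and>
     (\<forall>a\<in>S. \<forall>b\<in>S. \<forall>c\<in>S. (a, b) \<in> \<rho> \<longrightarrow> (m c a, m c b) \<in> \<rho> \<and> (m a c, m b c) \<in> \<rho>)"

definition delta_semigroup :: "'a set \<Rightarrow> ('a \<Rightarrow> 'a \<Rightarrow> 'a) \<Rightarrow> bool" where
  "delta_semigroup S m \<longleftrightarrow> semigroup_on S m \<and>
     (\<forall>\<rho> \<sigma>. congruence_on S m \<rho> \<and> congruence_on S m \<sigma> \<longrightarrow> \<rho> \<subseteq> \<sigma> \<or> \<sigma> \<subseteq> \<rho>)"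

text \<open>Positive powers: spow m x n = x^(n+1).\<close>
fun spow :: "('a \<Rightarrow> 'a \<Rightarrow> 'a) \<Rightarrow> 'a \<Rightarrow> nat \<Rightarrow> 'a" where
  "spow m x 0 = x"
| "spow m x (Suc n) = m (spow m x n) x"

definition ideal_on :: "'a set \<Rightarrow> ('a \<Rightarrow> 'a \<Rightarrow> 'a) \<Rightarrow> 'a set \<Rightarrow> bool" where
  "ideal_on S m I \<longleftrightarrow> I \<subseteq> S \<and> I \<noteq> {} \<and> (\<forall>x\<in>S. \<forall>y\<in>I. m x y \<in> I \<and> m y x \<in> I)"

definition nil_with_zero :: "'a set \<Rightarrow> ('a \<Rightarrow> 'a \<Rightarrow> 'a) \<Rightarrow> 'a \<Rightarrow> bool" where
  "nil_with_zero N m z \<longleftrightarrow> z \<in> N \<and> (\<forall>x\<in>N. m x z = z \<and> m z x = z) \<and>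
     (\<forall>x\<in>N. \<exists>n. spow m x n = z)"

definition T2R :: "'a set \<Rightarrow> ('a \<Rightarrow> 'a \<Rightarrow> 'a) \<Rightarrow> 'a set \<Rightarrow> 'a \<Rightarrow> 'a \<Rightarrow> 'a \<Rightarrow> bool" where
  "T2R S m S0 z u v \<longleftrightarrow> delta_semigroup S m \<and>
     S = S0 \<union> {u, v} \<and> S0 \<inter> {u, v} = {} \<and> u \<noteq> v \<and>
     ideal_on S m S0 \<and> nil_with_zero S0 m z \<and> (\<exists>x\<in>S0. x \<noteq> z) \<and>
     (\<forall>x\<in>{u, v}. \<forall>y\<in>{u, v}. m x y = y)"

definition set_square :: "'a set \<Rightarrow> ('a \<Rightarrow> 'a \<Rightarrow> 'a) \<Rightarrow> 'a set" where
  "set_square A m = {m x y | x y. x \<in> A \<and> y \<in> A}"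

end

theory Submission
  imports Defs
begin

theorem proposition7:
  fixes S S0 :: "'a set" and m :: "'a \<Rightarrow> 'a \<Rightarrow> 'a" and z u v :: 'a
  assumes "T2R S m S0 z u v"
  shows "set_square S0 m = S0"
proof -
  have sg: "semigroup_on S m" and dl: "delta_semigroup S m"
    using assms unfolding T2R_def delta_semigroup_def by auto
  have clos: "\<And>x y. x\<in>S \<Longrightarrow> y\<in>S \<Longrightarrow> m x y \<in> S"
    using sg unfolding semigroup_on_def by simp
  have assoc: "\<And>x y w. x\<in>S \<Longrightarrow> y\<in>S \<Longrightarrow> w\<in>S \<Longrightarrow> m (m x y) w = m x (m y w)"
    using sg unfolding semigroup_on_def by simp
  have chain: "\<And>\<rho> \<sigma>. congruence_on S m \<rho> \<Longrightarrow> congruence_on S m \<sigma> \<Longrightarrow> \<rho>\<subseteq>\<sigma> \<or> \<sigma>\<subseteq>\<rho>"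
    using dl unfolding delta_semigroup_def by simp
  have SS: "S = S0 \<union> {u,v}" and uS0: "u\<notin>S0" and vS0: "v\<notin>S0" and uv: "u\<noteq>v"
    using assms unfolding T2R_def by auto
  have idl: "\<And>x y. x\<in>S \<Longrightarrow> y\<in>S0 \<Longrightarrow> m x y\<in>S0 \<and> m y x \<in>S0"
    using assms unfolding T2R_def ideal_on_def by blast
  have z: "z\<in>S0" and zz: "m z z = z"
    using assms unfolding T2R_def nil_with_zero_def by auto
  have rz: "m u u = u" "m u v = v" "m v u = u" "m v v = v"
    using assms unfolding T2R_def by auto
  have S0S: "\<And>x. x\<in>S0 \<Longrightarrow> x\<in>S" using SS by auto
  have uS: "u\<in>S" and vS: "v\<in>S" using SS by auto
  have cases3: "\<And>x. x\<in>S \<Longrightarrow> x\<in>S0 \<or> x=u \<or> x=v" using SS by auto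
  define I where "I = set_square S0 m"
  have I_iff: "\<And>x. x\<in>I \<longleftrightarrow> (\<exists>a b. x = m a b \<and> a\<in>S0 \<and> b\<in>S0)"
    unfolding I_def set_square_def by auto
  have IS0: "I \<subseteq> S0"
  proof
    fix x assume "x\<in>I"
    then obtain a b where "x = m a b" "a\<in>S0" "b\<in>S0" using I_iff by blast
    thus "x\<in>S0" using idl S0S by blast
  qed
  have zI: "z\<in>I" unfolding I_iff using z zz by metis
  have Ir: "\<And>x w. x\<in>I \<Longrightarrow> w\<in>S \<Longrightarrow> m x w \<in> I"
  proof -
    fix x w assume "x\<in>I" "w\<in>S"
    then obtain a b where ab: "x = m a b" "a\<in>S0" "b\<in>S0" using I_iff by blast
    hence "m x w = m a (m b w)" using assoc[of a b w] S0S \<open>w\<in>S\<close> by auto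
    moreover have "m b w \<in> S0" using idl ab \<open>w\<in>S\<close> by blast
    ultimately show "m x w \<in> I" using I_iff ab by blast
  qed
  have Il: "\<And>x w. x\<in>I \<Longrightarrow> w\<in>S \<Longrightarrow> m w x \<in> I"
  proof -
    fix x w assume "x\<in>I" "w\<in>S"
    then obtain a b where ab: "x = m a b" "a\<in>S0" "b\<in>S0" using I_iff by blast
    hence "m w x = m (m w a) b" using assoc[of w a b] S0S \<open>w\<in>S\<close> by auto
    moreover have "m w a \<in> S0" using idl ab \<open>w\<in>S\<close> by blast
    ultimately show "m w x \<in> I" using I_iff ab by blast
  qed
  have key: False if J1: "I \<subseteq> J" and J2: "J \<subseteq> S0" and J3: "\<And>x. x\<in>J \<Longrightarrow> m x u \<in> J"
    and J4: "\<And>x. x\<in>J \<Longrightarrow> m x v \<in> J" and J5: "\<And>q. q\<in>S0 \<Longrightarrow> m u q \<in> J \<longleftrightarrow> m v q \<in> J"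
    and a1: "a' \<in> S0" and a2: "a' \<notin> J" for J a'
  proof -
    define P where "P = S0 - J"
    define \<sigma> where "\<sigma> = {(x,y). x\<in>S \<and> y\<in>S \<and> (x\<in>P \<longleftrightarrow> y\<in>P) \<and>
        (\<forall>p\<in>S. m p x \<in> P \<longleftrightarrow> m p y \<in> P) \<and> (\<forall>q\<in>S. m x q \<in> P \<longleftrightarrow> m y q \<in> P) \<and>
        (\<forall>p\<in>S. \<forall>q\<in>S. m p (m x q) \<in> P \<longleftrightarrow> m p (m y q) \<in> P)}"
    define \<rho> where "\<rho> = {(x,y). x\<in>S \<and> y\<in>S \<and> (x=y \<or> (x\<in>S0 \<and> y\<in>S0))}"
    have c\<sigma>: "congruence_on S m \<sigma>"
      unfolding congruence_on_def
    proof (intro conjI ballI impI)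
      show "equiv S \<sigma>" unfolding equiv_def refl_on_def sym_def trans_def \<sigma>_def by auto
    next
      fix a b c assume abc: "a\<in>S" "b\<in>S" "c\<in>S" and ab: "(a,b)\<in>\<sigma>"
      have h2: "\<And>p. p\<in>S \<Longrightarrow> m p a \<in> P \<longleftrightarrow> m p b \<in> P" using ab unfolding \<sigma>_def by blast
      have h3: "\<And>q. q\<in>S \<Longrightarrow> m a q \<in> P \<longleftrightarrow> m b q \<in> P" using ab unfolding \<sigma>_def by blast
      have h4: "\<And>p q. p\<in>S \<Longrightarrow> q\<in>S \<Longrightarrow> m p (m a q) \<in> P \<longleftrightarrow> m p (m b q) \<in> P"
        using ab unfolding \<sigma>_def by blast
      show "(m c a, m c b) \<in> \<sigma>"
        unfolding \<sigma>_def
      proof (simp, intro conjI ballI)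
        show "m c a \<in> S" "m c b \<in> S" using clos abc by auto
        show "(m c a \<in> P) = (m c b \<in> P)" using h2 abc by blast
      next
        fix p assume "p\<in>S"
        thus "(m p (m c a) \<in> P) = (m p (m c b) \<in> P)"
          using h2[of "m p c"] clos assoc abc by auto
      next
        fix q assume "q\<in>S"
        thus "(m (m c a) q \<in> P) = (m (m c b) q \<in> P)"
          using h4[of c q] clos assoc abc by auto
      next
        fix p q assume "p\<in>S" "q\<in>S"
        thus "(m p (m (m c a) q) \<in> P) = (m p (m (m c b) q) \<in> P)"
          using h4[of "m p c" q] clos assoc abc by auto
      qed
      show "(m a c, m b c) \<in> \<sigma>"
        unfolding \<sigma>_def
      proof (simp, intro conjI ballI)
        show "m a c \<in> S" "m b c \<in> S" using clos abc by auto
        show "(m a c \<in> P) = (m b c \<in> P)" using h3 abc by blast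
      next
        fix p assume "p\<in>S"
        thus "(m p (m a c) \<in> P) = (m p (m b c) \<in> P)"
          using h4[of p c] clos assoc abc by auto
      next
        fix q assume "q\<in>S"
        thus "(m (m a c) q \<in> P) = (m (m b c) q \<in> P)"
          using h3[of "m c q"] clos assoc abc by auto
      next
        fix p q assume "p\<in>S" "q\<in>S"
        thus "(m p (m (m a c) q) \<in> P) = (m p (m (m b c) q) \<in> P)"
          using h4[of p "m c q"] clos assoc abc by auto
      qed
    qed
    have c\<rho>: "congruence_on S m \<rho>"
      unfolding congruence_on_def
    proof (intro conjI ballI impI)
      show "equiv S \<rho>" unfolding equiv_def refl_on_def sym_def trans_def \<rho>_def by auto
    next
      fix a b c assume abc: "a\<in>S" "b\<in>S" "c\<in>S" and ab: "(a,b)\<in>\<rho>"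
      show "(m c a, m c b) \<in> \<rho>" "(m a c, m b c) \<in> \<rho>"
        using ab abc clos idl unfolding \<rho>_def by auto
    qed
    have Pu: "u\<notin>P" "v\<notin>P" using uS0 vS0 P_def by auto
    have crux: "\<And>q. q\<in>S \<Longrightarrow> m u q \<in> P \<longleftrightarrow> m v q \<in> P"
    proof -
      fix q assume q: "q\<in>S"
      show "m u q \<in> P \<longleftrightarrow> m v q \<in> P"
      proof (cases "q\<in>S0")
        case True
        then show ?thesis using J5[OF True] idl uS vS P_def by auto
      next
        case False
        then have "q=u \<or> q=v" using cases3 q by blast
        then show ?thesis using rz by auto
      qed
    qed
    have uv\<sigma>: "(u,v)\<in>\<sigma>"
      unfolding \<sigma>_def
    proof (simp, intro conjI ballI)
      show "u\<in>S" "v\<in>S" by (rule uS, rule vS)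
      show "(u \<in> P) = (v \<in> P)" using Pu by simp
    next
      fix p assume p: "p\<in>S"
      show "(m p u \<in> P) = (m p v \<in> P)"
      proof (cases "p\<in>S0")
        case True
        have e1: "m p u = m (m p v) u" using assoc p uS vS rz by simp
        have e2: "m p v = m (m p u) v" using assoc p uS vS rz by simp
        have "m p u \<in> J \<longleftrightarrow> m p v \<in> J" using J3 J4 e1 e2 by metis
        moreover have "m p u \<in> S0" "m p v \<in> S0" using idl True uS vS by auto
        ultimately show ?thesis using P_def by auto
      next
        case False
        then have "p=u \<or> p=v" using cases3 p by blast
        then show ?thesis using rz Pu by auto
      qed
    next
      fix q assume "q\<in>S" thus "(m u q \<in> P) = (m v q \<in> P)" using crux by blast
    next
      fix p q assume p: "p\<in>S" and q: "q\<in>S"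
      show "(m p (m u q) \<in> P) = (m p (m v q) \<in> P)"
      proof (cases "q\<in>S0")
        case qF: False
        then have "q=u \<or> q=v" using cases3 q by blast
        then show ?thesis using rz by auto
      next
        case qT: True
        show ?thesis
        proof (cases "p\<in>S0")
          case True
          have "m p (m u q) \<in> I" "m p (m v q) \<in> I"
            using I_iff True idl uS vS qT by blast+
          then show ?thesis using J1 P_def by auto
        next
          case False
          then have "p=u \<or> p=v" using cases3 p by blast
          then have "m p (m u q) = m u q" "m p (m v q) = m v q"
            using rz assoc[of p u q] assoc[of p v q] uS vS q by auto
          then show ?thesis using crux q by simp
        qed
      qed
    qed
    have "(a',z)\<in>\<rho>" using a1 z S0S unfolding \<rho>_def by auto
    moreover have "(a',z)\<notin>\<sigma>" using a1 a2 zI J1 unfolding \<sigma>_def P_def by auto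
    moreover have "(u,v)\<notin>\<rho>" using uS0 uv unfolding \<rho>_def by auto
    ultimately show False using chain[OF c\<sigma> c\<rho>] uv\<sigma> by blast
  qed
  show ?thesis
  proof (rule ccontr)
    assume "set_square S0 m \<noteq> S0"
    then obtain a where a: "a\<in>S0" "a\<notin>I" using IS0 I_def by blast
    define J1 where "J1 = {x\<in>S0. x\<in>I \<or> (\<exists>y\<in>S0. x = m u y \<or> x = m v y)}"
    show False
    proof (cases "S0 \<subseteq> J1")
      case False
      then obtain a' where a': "a'\<in>S0" "a'\<notin>J1" by blast
      show False
      proof (rule key[of J1 a'])
        show "I \<subseteq> J1" using IS0 J1_def by auto
        show "J1 \<subseteq> S0" using J1_def by auto
        show "a'\<in>S0" "a'\<notin>J1" by (rule a')+
      next
        fix q assume "q\<in>S0" thus "m u q \<in> J1 \<longleftrightarrow> m v q \<in> J1"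
          using J1_def idl uS vS by auto
      next
        fix x assume x: "x\<in>J1"
        show "m x u \<in> J1"
        proof -
          have xS0: "x\<in>S0" using x J1_def by auto
          have "m x u \<in> S0" using idl xS0 uS by blast
          moreover have "m x u\<in>I \<or> (\<exists>y\<in>S0. m x u = m u y \<or> m x u = m v y)"
          proof -
            have "x\<in>I \<or> (\<exists>y\<in>S0. x = m u y \<or> x = m v y)" using x J1_def by auto
            then show ?thesis
            proof
              assume "x\<in>I" thus ?thesis using Ir uS by blast
            next
              assume "\<exists>y\<in>S0. x = m u y \<or> x = m v y"
              then obtain y where y: "y\<in>S0" "x = m u y \<or> x = m v y" by blast
              have "m y u \<in> S0" using idl y uS by blast
              moreover have "m x u = m u (m y u) \<or> m x u = m v (m y u)"
                using y assoc[of u y u] assoc[of v y u] assoc[of u y v] assoc[of v y v] uS vS S0S by auto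
              ultimately show ?thesis by blast
            qed
          qed
          ultimately show ?thesis using J1_def by blast
        qed
        show "m x v \<in> J1"
        proof -
          have xS0: "x\<in>S0" using x J1_def by auto
          have "m x v \<in> S0" using idl xS0 vS by blast
          moreover have "m x v\<in>I \<or> (\<exists>y\<in>S0. m x v = m u y \<or> m x v = m v y)"
          proof -
            have "x\<in>I \<or> (\<exists>y\<in>S0. x = m u y \<or> x = m v y)" using x J1_def by auto
            then show ?thesis
            proof
              assume "x\<in>I" thus ?thesis using Ir vS by blast
            next
              assume "\<exists>y\<in>S0. x = m u y \<or> x = m v y"
              then obtain y where y: "y\<in>S0" "x = m u y \<or> x = m v y" by blast
              have "m y v \<in> S0" using idl y vS by blast
              moreover have "m x v = m u (m y v) \<or> m x v = m v (m y v)"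
                using y assoc[of u y u] assoc[of v y u] assoc[of u y v] assoc[of v y v] uS vS S0S by auto
              ultimately show ?thesis by blast
            qed
          qed
          ultimately show ?thesis using J1_def by blast
        qed
      qed
    next
      case True
      show False
      proof (rule key[of I a])
        show "I \<subseteq> I" by simp
        show "I \<subseteq> S0" by (rule IS0)
        show "a\<in>S0" "a\<notin>I" by (rule a)+
      next
        fix x assume "x\<in>I" thus "m x u \<in> I" "m x v \<in> I" using Ir uS vS by auto
      next
        fix q assume q: "q\<in>S0"
        then have "q\<in>I \<or> (\<exists>y\<in>S0. q = m u y \<or> q = m v y)" using True J1_def by auto
        then show "m u q \<in> I \<longleftrightarrow> m v q \<in> I"
        proof
          assume "q\<in>I" thus ?thesis using Il uS vS by auto
        next
          assume "\<exists>y\<in>S0. q = m u y \<or> q = m v y"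
          then obtain y where y: "y\<in>S0" "q = m u y \<or> q = m v y" by blast
          then have "m u q = q" "m v q = q"
            using assoc[of u u y] assoc[of v u y] assoc[of u v y] assoc[of v v y] uS vS S0S rz by auto
          thus ?thesis by simp
        qed
      qed
    qed
  qed
qed

end
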